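(* Let $u(x)=\dfrac{2}{f(x)}\exp\left(-\dfrac{x f(x)+x^2}{2}\right)$ for $0<x\le 1$. Then $u(x)<\sqrt{\pi/2}$ for all $x\in(0,1]$.
   Context: For $x\in(0,1]$, $f(x)$ denotes the unique number $y\in[1,\infty)$ with $x e^{-x^2/2}=y e^{-y^2/2}$ (this is well defined since $t\mapsto te^{-t^2/2}$ is strictly increasing on $(0,1)$, strictly decreasing on $(1,\infty)$ and tends to $0$ at $+\infty$). *)

theory Defs
  imports "HOL-Analysis.Analysis"
begin

definition f :: "real \<Rightarrow> real" where
  "f x = (THE y. y \<ge> 1 \<and> x * exp (-(x^2)/2) = y * exp (-(y^2)/2))"

definition u :: "real \<Rightarrow> real" where
  "u x = 2 / f x * exp (-(x * f x + x^2) / 2)"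

end

theory Submission
  imports Defs
begin

definition phi :: "real \<Rightarrow> real" where "phi t = t * exp (-(t^2)/2)"

lemma phi_deriv: "DERIV phi t :> (1 - t^2) * exp (-(t^2)/2)"
  unfolding phi_def
  by (auto intro!: derivative_eq_intros simp: algebra_simps power2_eq_square)

lemma phi_dec:
  assumes "1 \<le> a" "a < b" shows "phi b < phi a"
proof -
  obtain z where z: "a < z" "z < b" "phi b - phi a = (b - a) * ((1 - z^2) * exp (-(z^2)/2))"
    using MVT2[OF assms(2), of phi "\<lambda>t. (1 - t^2) * exp (-(t^2)/2)"] phi_deriv by blast
  have "1 < z^2" using z assms by (metis less_le_trans one_less_power pos2 zero_neq_numeral order.strict_trans1)
  then have "(1 - z^2) * exp (-(z^2)/2) < 0" by (simp add: mult_neg_pos)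
  moreover have "b - a > 0" using z by simp
  ultimately have "(b - a) * ((1 - z^2) * exp (-(z^2)/2)) < 0"
    by (simp add: mult_pos_neg)
  with z show ?thesis by linarith
qed

lemma phi_inc:
  assumes "0 \<le> a" "a < b" "b \<le> 1" shows "phi a < phi b"
proof -
  obtain z where z: "a < z" "z < b" "phi b - phi a = (b - a) * ((1 - z^2) * exp (-(z^2)/2))"
    using MVT2[OF assms(2), of phi "\<lambda>t. (1 - t^2) * exp (-(t^2)/2)"] phi_deriv by blast
  have "z^2 < 1" using z assms by (simp add: abs_square_less_1)
  then have "(b - a) * ((1 - z^2) * exp (-(z^2)/2)) > 0"
    using z assms by (intro mult_pos_pos) auto
  with z show ?thesis by linarith
qed

lemma phi_inj:
  assumes "1 \<le> a" "1 \<le> b" "phi a = phi b" shows "a = b"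
  using phi_dec[of a b] phi_dec[of b a] assms by (cases a b rule: linorder_cases) auto

lemma phi_exists:
  assumes "0 < x" "x \<le> 1"
  shows "\<exists>y. 1 \<le> y \<and> phi y = phi x"
proof -
  have h1: "phi x \<le> phi 1"
    using phi_inc[of x 1] assms by (cases "x = 1") auto
  define M where "M = 4 / x"
  have M4: "M \<ge> 4" using assms unfolding M_def by (simp add: field_simps)
  have "1 + M^2/2 \<le> exp (M^2/2)" using exp_ge_add_one_self by blast
  then have eM: "M^2/2 < exp (M^2/2)" by linarith
  have "phi M = M / exp (M^2/2)" unfolding phi_def by (simp add: exp_minus field_simps)
  also have "\<dots> \<le> M / (M^2/2)"
    using eM M4 by (intro divide_left_mono) auto
  also have "\<dots> = 2 / M" using M4 by (simp add: power2_eq_square field_simps)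
  also have "\<dots> = x / 2" using assms unfolding M_def by simp
  finally have pM: "phi M \<le> x / 2" .
  have "1 - 1/2 \<le> exp (-(1/2::real))" using exp_ge_add_one_self[of "-(1/2)"] by simp
  moreover have "exp (-(1/2::real)) \<le> exp (-(x^2)/2)"
  proof -
    have "x^2 \<le> 1" using assms by (simp add: power_le_one)
    then show ?thesis by simp
  qed
  ultimately have "1/2 \<le> exp (-(x^2)/2)" by linarith
  then have "x * (1/2) \<le> x * exp (-(x^2)/2)" using assms by (intro mult_left_mono) auto
  then have "x / 2 \<le> x * exp (-(x^2)/2)" by simp
  then have "phi M \<le> phi x" using pM unfolding phi_def by linarith
  moreover have "\<forall>t. 1 \<le> t \<and> t \<le> M \<longrightarrow> isCont phi t"
    unfolding phi_def by (auto intro!: continuous_intros)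
  ultimately obtain y where "1 \<le> y" "y \<le> M" "phi y = phi x"
    using IVT2[of phi M "phi x" 1] h1 M4 by auto
  then show ?thesis by blast
qed

lemma f_prop:
  assumes "0 < x" "x \<le> 1"
  shows "1 \<le> f x \<and> x * exp (-(x^2)/2) = f x * exp (-((f x)^2)/2)"
proof -
  have "\<exists>!y. y \<ge> 1 \<and> x * exp (-(x^2)/2) = y * exp (-(y^2)/2)"
    using phi_exists[OF assms] phi_inj unfolding phi_def by metis
  then show ?thesis unfolding f_def by (rule theI')
qed

lemma L:
  fixes x y a lo hi :: real
  assumes "0 < x" "1 \<le> lo" "lo \<le> y" "y \<le> hi" "hi \<le> 2"
    "x * exp (-(x^2)/2) = y * exp (-(y^2)/2)" "0 \<le> a"
    "a \<le> lo * (1 - (hi^2/2)/32)^32"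
    "2/lo \<le> 5/4 * (1 + ((a*lo+a^2)/2)/32)^32"
  shows "2/y * exp (-(x*y+x^2)/2) \<le> 5/4"
proof -
  have "hi^2 \<le> 2^2" using assms by (intro power_mono) auto
  then have b1sq: "hi^2 \<le> 4" by simp
  have e1: "(1 - (hi^2/2)/32)^32 \<le> exp (-(hi^2/2))"
    using exp_ge_one_minus_x_over_n_power_n[of "hi^2/2" 32] b1sq by simp
  have "y^2 \<le> hi^2" using assms by (intro power_mono) auto
  then have e2: "exp (-(hi^2/2)) \<le> exp (-(y^2)/2)" by simp
  have "a \<le> lo * (1 - (hi^2/2)/32)^32" by (rule assms(8))
  also have "\<dots> \<le> lo * exp (-(hi^2/2))" using e1 assms(2) by (intro mult_left_mono) auto
  also have "\<dots> \<le> lo * exp (-(y^2)/2)" using e2 assms(2) by (intro mult_left_mono) auto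
  also have "\<dots> \<le> y * exp (-(y^2)/2)" using assms by (intro mult_right_mono) auto
  also have "\<dots> = x * exp (-(x^2)/2)" using assms by simp
  also have "\<dots> \<le> x * 1" using assms(1) by (intro mult_left_mono) auto
  also have "\<dots> = x" by simp
  finally have ax: "a \<le> x" .
  have "a*lo + a^2 \<le> x*y + x^2"
    using ax assms by (intro add_mono mult_mono power_mono) auto
  then have ex: "exp (-(x*y+x^2)/2) \<le> exp (-(a*lo+a^2)/2)" by simp
  define d where "d = (a*lo+a^2)/2"
  have d0: "d \<ge> 0" using assms unfolding d_def by simp
  have pd: "(1 + d/32)^32 \<le> exp d"
    using exp_ge_one_plus_x_over_n_power_n[of 32 d] d0 by simp
  have pdpos: "(1 + d/32)^32 > 0" using d0 by simp
  have "exp (-(a*lo+a^2)/2) = 1 / exp d"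
  proof -
    have "-(a*lo+a^2)/2 = -d" unfolding d_def by (simp add: field_simps)
    then show ?thesis by (simp add: exp_minus inverse_eq_divide)
  qed
  also have "\<dots> \<le> 1 / (1 + d/32)^32" using pd pdpos by (intro divide_left_mono) auto
  finally have ex2: "exp (-(x*y+x^2)/2) \<le> 1 / (1 + d/32)^32" using ex by linarith
  have "2/y \<le> 2/lo" using assms by (intro divide_left_mono) auto
  then have "2/y * exp (-(x*y+x^2)/2) \<le> 2/lo * (1 / (1 + d/32)^32)"
    using ex2 assms by (intro mult_mono) auto
  also have "\<dots> = (2/lo) / (1 + d/32)^32" by simp
  also have "\<dots> \<le> (5/4 * (1 + d/32)^32) / (1 + d/32)^32"
    using assms(9) pdpos unfolding d_def by (intro divide_right_mono) auto
  also have "\<dots> = 5/4" using pdpos by simp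
  finally show ?thesis .
qed

theorem lemma3p4:
  fixes x :: real
  assumes "0 < x" and "x \<le> 1"
  shows "u x < sqrt (pi / 2)"
proof -
  define y where "y = f x"
  have y1: "1 \<le> y" and eq: "x * exp (-(x^2)/2) = y * exp (-(y^2)/2)"
    using f_prop[OF assms] unfolding y_def by auto
  have ux: "u x = 2/y * exp (-(x*y+x^2)/2)" unfolding u_def y_def by simp
  have main: "u x \<le> 5/4"
  proof -
    consider "y \<le> 101/100" | "101/100 \<le> y \<and> y \<le> 103/100" | "103/100 \<le> y \<and> y \<le> 106/100"
      | "106/100 \<le> y \<and> y \<le> 110/100" | "110/100 \<le> y \<and> y \<le> 116/100"
      | "116/100 \<le> y \<and> y \<le> 124/100" | "124/100 \<le> y \<and> y \<le> 135/100"
      | "135/100 \<le> y \<and> y \<le> 150/100" | "150/100 \<le> y \<and> y \<le> 160/100" | "160/100 \<le> y"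
      by linarith
    then show ?thesis
    proof cases
      case 1 note c = this
      show ?thesis unfolding ux
        by (intro L[OF assms(1) _ y1 _ _ eq, where hi="101/100" and a="299/500"]) (use c in \<open>simp_all add: power_divide\<close>)
    next
      case 2 note c = this
      show ?thesis unfolding ux
        by (intro L[OF assms(1) _ _ _ _ eq, where lo="101/100" and hi="103/100" and a="591/1000"]) (use c in \<open>simp_all add: power_divide\<close>)
    next
      case 3 note c = this
      show ?thesis unfolding ux
        by (intro L[OF assms(1) _ _ _ _ eq, where lo="103/100" and hi="106/100" and a="73/125"]) (use c in \<open>simp_all add: power_divide\<close>)
    next
      case 4 note c = this
      show ?thesis unfolding ux
        by (intro L[OF assms(1) _ _ _ _ eq, where lo="106/100" and hi="110/100" and a="23/40"]) (use c in \<open>simp_all add: power_divide\<close>)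
    next
      case 5 note c = this
      show ?thesis unfolding ux
        by (intro L[OF assms(1) _ _ _ _ eq, where lo="110/100" and hi="116/100" and a="557/1000"]) (use c in \<open>simp_all add: power_divide\<close>)
    next
      case 6 note c = this
      show ?thesis unfolding ux
        by (intro L[OF assms(1) _ _ _ _ eq, where lo="116/100" and hi="124/100" and a="133/250"]) (use c in \<open>simp_all add: power_divide\<close>)
    next
      case 7 note c = this
      show ?thesis unfolding ux
        by (intro L[OF assms(1) _ _ _ _ eq, where lo="124/100" and hi="135/100" and a="491/1000"]) (use c in \<open>simp_all add: power_divide\<close>)
    next
      case 8 note c = this
      show ?thesis unfolding ux
        by (intro L[OF assms(1) _ _ _ _ eq, where lo="135/100" and hi="150/100" and a="429/1000"]) (use c in \<open>simp_all add: power_divide\<close>)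
    next
      case 9 note c = this
      show ?thesis unfolding ux
        by (intro L[OF assms(1) _ _ _ _ eq, where lo="150/100" and hi="160/100" and a="203/500"]) (use c in \<open>simp_all add: power_divide\<close>)
    next
      case 10
      have "0 \<le> x*y+x^2" using assms y1 by simp
      then have "exp (-(x*y+x^2)/2) \<le> 1" by simp
      moreover have "2/y \<le> 5/4" using 10 by (simp add: field_simps)
      ultimately have "2/y * exp (-(x*y+x^2)/2) \<le> 5/4 * 1"
        using y1 by (intro mult_mono) auto
      then show ?thesis unfolding ux by simp
    qed
  qed
  have "(5/4::real)^2 < pi / 2" using pi_gt3 pi_approx
    by (simp add: power2_eq_square abs_le_iff)
  then have "5/4 < sqrt (pi / 2)" by (intro real_less_rsqrt)
  with main show ?thesis by linarith
qed

end
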